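(* Let $m>1$, $D>0$, $r>0$, let $b,d$ be as in the standing assumptions below with $b'(\kappa)<0$, and let $c_\kappa$ and $c^*$ be as defined below. Then $c^*(m,r,b'(\kappa),d'(\kappa))\ge c_\kappa(m,r,b'(\kappa),d'(\kappa))$. If $b'(\kappa)\ge-d'(\kappa)$, then $c^*(m,r,b'(\kappa),d'(\kappa))=+\infty$ for large time delay $r$; while if $b'(\kappa)<-d'(\kappa)$, then $$c^*(m,r,b'(\kappa),d'(\kappa))=\frac{\mu^*(m,b'(\kappa),d'(\kappa))+o(1)}{r},\qquad r\to+\infty,$$ where $\mu^*(m,b'(\kappa),d'(\kappa)):=\pi\sqrt{\frac{Dm\kappa^{m-1}}{-b'(\kappa)-d'(\kappa)}}$.
   Context: Standing assumptions: $d\in C^2([0,+\infty))$ with $d(0)=0$, $d'(s)>0$, $d''(s)\ge0$ for $s>0$; $b\in C^1([0,+\infty);[0,+\infty))$ has exactly one positive local extremum point $s_M$ (its global maximum point), $b(0)=0$, there is $\kappa>0$ with $b(\kappa)=d(\kappa)$, $b'(0)>d'(0)$, $b'(\kappa)<d'(\kappa)$, $d(s)<b(s)\le b'(0)s$ for $s\in(0,\kappa)$, and $s_M<\kappa$. For $c>0$ let $\chi_\kappa(\lambda):=Dm\kappa^{m-1}\lambda^2+b'(\kappa)e^{-\lambda cr}-c\lambda-d'(\kappa)$; $c_\kappa\in(0,+\infty]$ is the extended real number such that $\chi_\kappa$ has three real roots $\lambda_1\le\lambda_2<0<\lambda_3$ if and only if $c\le c_\kappa$ (and no negative real root for $c>c_\kappa$).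 With $\sigma=c^{-2}$, let $\chi^*(\lambda):=D\sigma m\kappa^{m-1}\lambda^2-\lambda-d'(\kappa)+b'(\kappa)e^{-\lambda r}$, $\lambda\in\mathbb C$. Then $c^*=c^*(m,r,b'(\kappa),d'(\kappa))\in(0,+\infty]$ is the largest extended real number such that (for speeds $c$ below it) $\chi^*$ has no roots in the half-plane $\{\Re z>0\}$ other than a positive real root. *)

theory Defs
  imports "HOL-Analysis.Analysis" "HOL-Library.Extended_Real"
begin

text \<open>Parameters: D (diffusion), m (porous-medium exponent), kappa (positive equilibrium),
  B = b'(kappa), d1 = d'(kappa), c (speed), r (delay).\<close>

definition chi_kappa :: "real \<Rightarrow> real \<Rightarrow> real \<Rightarrow> real \<Rightarrow> real \<Rightarrow> real \<Rightarrow> real \<Rightarrow> real \<Rightarrow> real" where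
  "chi_kappa D m kappa B d1 r c lam =
     D * m * kappa powr (m - 1) * lam\<^sup>2 + B * exp (- lam * c * r) - c * lam - d1"

definition chi_kappa' :: "real \<Rightarrow> real \<Rightarrow> real \<Rightarrow> real \<Rightarrow> real \<Rightarrow> real \<Rightarrow> real \<Rightarrow> real \<Rightarrow> real" where
  "chi_kappa' D m kappa B d1 r c lam =
     2 * D * m * kappa powr (m - 1) * lam - B * c * r * exp (- lam * c * r) - c"

definition three_real_roots :: "real \<Rightarrow> real \<Rightarrow> real \<Rightarrow> real \<Rightarrow> real \<Rightarrow> real \<Rightarrow> real \<Rightarrow> bool" where
  "three_real_roots D m kappa B d1 r c \<longleftrightarrow>
     (\<exists>l1 l2 l3. l1 \<le> l2 \<and> l2 < 0 \<and> 0 < l3 \<and>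
        chi_kappa D m kappa B d1 r c l1 = 0 \<and> chi_kappa D m kappa B d1 r c l2 = 0 \<and>
        chi_kappa D m kappa B d1 r c l3 = 0 \<and>
        (l1 = l2 \<longrightarrow> chi_kappa' D m kappa B d1 r c l1 = 0))"

definition c_kappa :: "real \<Rightarrow> real \<Rightarrow> real \<Rightarrow> real \<Rightarrow> real \<Rightarrow> real \<Rightarrow> ereal" where
  "c_kappa D m kappa B d1 r =
     Sup {ereal c | c. c > 0 \<and> three_real_roots D m kappa B d1 r c}"

definition chi_star :: "real \<Rightarrow> real \<Rightarrow> real \<Rightarrow> real \<Rightarrow> real \<Rightarrow> real \<Rightarrow> real \<Rightarrow> complex \<Rightarrow> complex" where
  "chi_star D m kappa B d1 r c z =
     of_real (D * (1 / c\<^sup>2) * m * kappa powr (m - 1)) * z\<^sup>2 - z - of_real d1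
       + of_real B * exp (- z * of_real r)"

definition no_bad_roots :: "real \<Rightarrow> real \<Rightarrow> real \<Rightarrow> real \<Rightarrow> real \<Rightarrow> real \<Rightarrow> real \<Rightarrow> bool" where
  "no_bad_roots D m kappa B d1 r c \<longleftrightarrow>
     (\<forall>z. Re z > 0 \<longrightarrow> chi_star D m kappa B d1 r c z = 0 \<longrightarrow> Im z = 0)"

definition c_star :: "real \<Rightarrow> real \<Rightarrow> real \<Rightarrow> real \<Rightarrow> real \<Rightarrow> real \<Rightarrow> ereal" where
  "c_star D m kappa B d1 r =
     Sup {c0 :: ereal. \<forall>c::real. 0 < c \<and> ereal c < c0 \<longrightarrow> no_bad_roots D m kappa B d1 r c}"

definition mu_star :: "real \<Rightarrow> real \<Rightarrow> real \<Rightarrow> real \<Rightarrow> real \<Rightarrow> real" where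
  "mu_star D m kappa B d1 = pi * sqrt (D * m * kappa powr (m - 1) / (- B - d1))"

definition loc_extremum :: "(real \<Rightarrow> real) \<Rightarrow> real \<Rightarrow> bool" where
  "loc_extremum f s \<longleftrightarrow>
     (\<exists>e>0. \<forall>t. \<bar>t - s\<bar> < e \<longrightarrow> f t \<le> f s) \<or> (\<exists>e>0. \<forall>t. \<bar>t - s\<bar> < e \<longrightarrow> f s \<le> f t)"

end

theory Submission
  imports Defs
begin


lemma cos_ge_quad: "cos (x::real) \<ge> 1 - x\<^sup>2 / 2"
proof -
  have "cos x = cos (2 * (x/2))" by simp
  also have "\<dots> = 1 - 2 * sin (x/2) ^ 2" by (rule cos_double_sin)
  finally have e: "cos x = 1 - 2 * sin (x/2) ^ 2" .
  have "\<bar>sin (x/2)\<bar> \<le> \<bar>x/2\<bar>" by (rule abs_sin_x_le_abs_x)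
  hence "\<bar>sin (x/2)\<bar>^2 \<le> \<bar>x/2\<bar>^2" by (intro power_mono) auto
  hence "sin (x/2) ^ 2 \<le> (x/2)^2" by (simp only: power2_abs)
  thus ?thesis using e by (simp add: power_divide)
qed

lemma exp_ge_sq: assumes "(u::real) \<ge> 0" shows "u\<^sup>2 \<le> exp u"
proof -
  have "1 + u/2 + (u/2)\<^sup>2/2 \<le> exp (u/2)" using assms by (intro exp_lower_Taylor_quadratic) simp
  moreover have "u \<le> 1 + u/2 + (u/2)\<^sup>2/2"
  proof -
    have "0 \<le> (u/2 - 1)\<^sup>2 + 1" by simp
    thus ?thesis by (simp add: power2_eq_square field_simps)
  qed
  ultimately have "u \<le> exp (u/2)" by linarith
  hence "u\<^sup>2 \<le> (exp (u/2))\<^sup>2" using assms by (intro power_mono) auto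
  also have "(exp (u/2))\<^sup>2 = exp u" by (simp add: power2_eq_square exp_add[symmetric])
  finally show ?thesis .
qed

lemma key_ineq:
  fixes u \<xi> \<eta> :: real
  assumes xi: "0 < \<xi>" and xu: "\<xi> \<le> u" and eta: "\<eta> \<noteq> 0"
  shows "(- cos \<eta> - \<xi> * (sin \<eta> / \<eta>)) * (u\<^sup>2 + \<eta>\<^sup>2)
         \<le> (exp u - cos \<eta> - u * (sin \<eta> / \<eta>)) * (\<xi>\<^sup>2 + \<eta>\<^sup>2)"
proof -
  define S where "S = sin \<eta> / \<eta>"
  define C where "C = cos \<eta>"
  have Seta: "S * \<eta>\<^sup>2 = \<eta> * sin \<eta>" using eta by (simp add: S_def power2_eq_square)
  have eq: "(- C - \<xi> * S) * (u\<^sup>2 + \<eta>\<^sup>2) - (exp u - C - u * S) * (\<xi>\<^sup>2 + \<eta>\<^sup>2)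
      = (u - \<xi>) * (- C * (u + \<xi>) - S * \<xi> * u + S * \<eta>\<^sup>2) - exp u * (\<xi>\<^sup>2 + \<eta>\<^sup>2)"
    by (simp add: algebra_simps power2_eq_square)
  have "(u - \<xi>) * (- C * (u + \<xi>) - S * \<xi> * u + S * \<eta>\<^sup>2) = (u - \<xi>) * (- C * (u + \<xi>) - S * \<xi> * u + \<eta> * sin \<eta>)"
    using Seta by simp
  note eq = eq[unfolded this]
  have Cb: "C \<ge> 1 - \<eta>\<^sup>2/2" unfolding C_def by (rule cos_ge_quad)
  have "\<bar>sin \<eta>\<bar> \<le> \<bar>\<eta>\<bar>" by (rule abs_sin_x_le_abs_x)
  hence Sb: "\<bar>S\<bar> \<le> 1" using eta by (simp add: S_def abs_divide divide_le_eq)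
  have Eb: "\<eta> * sin \<eta> \<le> \<eta>\<^sup>2"
  proof -
    have "\<eta> * sin \<eta> \<le> \<bar>\<eta>\<bar> * \<bar>sin \<eta>\<bar>" by (simp add: abs_mult[symmetric])
    also have "\<dots> \<le> \<bar>\<eta>\<bar> * \<bar>\<eta>\<bar>" using \<open>\<bar>sin \<eta>\<bar> \<le> \<bar>\<eta>\<bar>\<close> by (intro mult_left_mono) auto
    finally show ?thesis by (simp add: power2_eq_square)
  qed
  have u0: "u > 0" using xi xu by linarith
  have h1a: "- C * (u + \<xi>) \<le> - (1 - \<eta>\<^sup>2/2) * (u + \<xi>)"
    using Cb u0 xi by (intro mult_right_mono) auto
  have h1b: "- (1 - \<eta>\<^sup>2/2) * (u + \<xi>) = - (u + \<xi>) + \<eta>\<^sup>2 * (u + \<xi>) / 2"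
    by (simp add: algebra_simps)
  have h2: "- S * \<xi> * u \<le> \<xi> * u"
  proof -
    have "- S * (\<xi> * u) \<le> 1 * (\<xi> * u)" using Sb xi u0 by (intro mult_right_mono) auto
    thus ?thesis by simp
  qed
  have br': "- C * (u + \<xi>) - S * \<xi> * u + \<eta> * sin \<eta>
      \<le> - (u + \<xi>) + \<eta>\<^sup>2 * (u + \<xi>) / 2 + \<xi> * u + \<eta>\<^sup>2"
    using h1a h1b h2 Eb by linarith
  have "- (u + \<xi>) + \<eta>\<^sup>2 * (u + \<xi>) / 2 + \<xi> * u + \<eta>\<^sup>2 = (\<xi> * u - u - \<xi>) + \<eta>\<^sup>2 * ((u + \<xi>)/2 + 1)"
    by (simp add: algebra_simps)
  note br = br'[unfolded this]
  have m1: "(u - \<xi>) * (- C * (u + \<xi>) - S * \<xi> * u + \<eta> * sin \<eta>)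
      \<le> (u - \<xi>) * ((\<xi> * u - u - \<xi>) + \<eta>\<^sup>2 * ((u + \<xi>)/2 + 1))"
    using br xu by (intro mult_left_mono) auto
  have t1: "(u - \<xi>) * (\<xi> * u - u - \<xi>) \<le> \<xi>\<^sup>2 * exp u"
  proof (cases "\<xi> * u - u - \<xi> \<le> 0")
    case True
    hence "(u - \<xi>) * (\<xi> * u - u - \<xi>) \<le> 0" using xu by (simp add: mult_nonneg_nonpos)
    moreover have "0 \<le> \<xi>\<^sup>2 * exp u" by simp
    ultimately show ?thesis by linarith
  next
    case False
    hence x1: "\<xi> \<ge> 1" using u0 xi
      by (smt (verit, best) mult_le_cancel_right1)
    have "(u - \<xi>) * (\<xi> * u - u - \<xi>) \<le> u * (\<xi> * u)"
      using False xu xi u0 by (intro mult_mono) auto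
    also have "\<dots> = \<xi> * u\<^sup>2" by (simp add: power2_eq_square)
    also have "\<dots> \<le> \<xi> * exp u" using exp_ge_sq[of u] u0 xi by (intro mult_left_mono) auto
    also have "\<dots> \<le> \<xi>\<^sup>2 * exp u" using x1 by (intro mult_right_mono) (auto simp: power2_eq_square)
    finally show ?thesis .
  qed
  have t2: "(u - \<xi>) * ((u + \<xi>)/2 + 1) \<le> exp u"
  proof -
    have "(u - \<xi>) * ((u + \<xi>)/2 + 1) = (u\<^sup>2 - \<xi>\<^sup>2)/2 + u - \<xi>" by (simp add: algebra_simps power2_eq_square)
    also have "\<dots> \<le> 1 + u + u\<^sup>2/2"
    proof -
      have "0 \<le> \<xi>\<^sup>2" by simp
      thus ?thesis using xi by (simp add: field_simps)
    qed
    also have "\<dots> \<le> exp u" using u0 by (intro exp_lower_Taylor_quadratic) simp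
    finally show ?thesis .
  qed
  have "(u - \<xi>) * ((\<xi> * u - u - \<xi>) + \<eta>\<^sup>2 * ((u + \<xi>)/2 + 1))
     = (u - \<xi>) * (\<xi> * u - u - \<xi>) + \<eta>\<^sup>2 * ((u - \<xi>) * ((u + \<xi>)/2 + 1))" by (simp add: algebra_simps)
  also have "\<dots> \<le> \<xi>\<^sup>2 * exp u + \<eta>\<^sup>2 * exp u" using t1 t2 by (intro add_mono mult_left_mono) auto
  finally have "(u - \<xi>) * (- C * (u + \<xi>) - S * \<xi> * u + \<eta> * sin \<eta>) - exp u * (\<xi>\<^sup>2 + \<eta>\<^sup>2) \<le> 0"
    using m1 by (simp add: algebra_simps)
  with eq show ?thesis unfolding S_def C_def by simp
qed

lemma IR_facts:
  fixes \<alpha> \<epsilon> d1 \<beta> \<xi> \<eta> :: real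
  assumes eta: "\<eta> \<noteq> 0"
    and I: "2*\<alpha>*\<xi>*\<eta> - \<epsilon>*\<eta> + \<beta>*exp(-\<xi>)* sin \<eta> = 0"
    and R: "\<alpha>*(\<xi>\<^sup>2-\<eta>\<^sup>2) - \<epsilon>*\<xi> - d1 - \<beta>*exp(-\<xi>)*cos \<eta> = 0"
  shows "\<epsilon> = 2*\<alpha>*\<xi> + \<beta>*exp(-\<xi>)*(sin \<eta>/\<eta>)"
    and "\<alpha>*(\<xi>\<^sup>2+\<eta>\<^sup>2) = - d1 - \<beta>*exp(-\<xi>)*cos \<eta> - \<xi>*\<beta>*exp(-\<xi>)*(sin \<eta>/\<eta>)"
proof -
  have "\<eta> * (2*\<alpha>*\<xi> - \<epsilon> + \<beta>*exp(-\<xi>)*(sin \<eta>/\<eta>)) = 0"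
    using I eta by (simp add: algebra_simps)
  with eta show e: "\<epsilon> = 2*\<alpha>*\<xi> + \<beta>*exp(-\<xi>)*(sin \<eta>/\<eta>)" by simp
  show "\<alpha>*(\<xi>\<^sup>2+\<eta>\<^sup>2) = - d1 - \<beta>*exp(-\<xi>)*cos \<eta> - \<xi>*\<beta>*exp(-\<xi>)*(sin \<eta>/\<eta>)"
    using R unfolding e by (simp add: algebra_simps power2_eq_square)
qed

lemma P1_abstract:
  fixes \<alpha> \<epsilon> d1 \<beta> \<xi> \<eta> s :: real
  assumes d1: "d1 > 0" and be: "\<beta> > 0" and xi: "\<xi> > 0" and eta: "\<eta> \<noteq> 0" and s: "s > 0"
    and I: "2*\<alpha>*\<xi>*\<eta> - \<epsilon>*\<eta> + \<beta>*exp(-\<xi>)* sin \<eta> = 0"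
    and R: "\<alpha>*(\<xi>\<^sup>2-\<eta>\<^sup>2) - \<epsilon>*\<xi> - d1 - \<beta>*exp(-\<xi>)*cos \<eta> = 0"
  shows "\<alpha>* s\<^sup>2 + \<epsilon>* s < d1 + \<beta>*exp s"
proof -
  define P where "P = \<beta>*exp(-\<xi>)"
  define S where "S = sin \<eta>/\<eta>"
  define C where "C = cos \<eta>"
  define u where "u = s + \<xi>"
  have P0: "P > 0" using be by (simp add: P_def)
  have epsS: "\<epsilon> = 2*\<alpha>*\<xi> + P* S" using IR_facts(1)[OF eta I R] by (simp add: P_def S_def)
  have aQ: "\<alpha>*(\<xi>\<^sup>2+\<eta>\<^sup>2) = - d1 + P*(- C - \<xi>* S)"
    using IR_facts(2)[OF eta I R] by (simp add: P_def S_def C_def algebra_simps)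
  have d1eq: "d1 = \<alpha>*(\<xi>\<^sup>2-\<eta>\<^sup>2) - \<epsilon>*\<xi> - P*C" using R by (simp add: P_def C_def)
  have key: "(- C - \<xi>* S) * (u\<^sup>2+\<eta>\<^sup>2) \<le> (exp u - C - u* S) * (\<xi>\<^sup>2+\<eta>\<^sup>2)"
    unfolding C_def S_def using key_ineq[OF xi _ eta, of u] s by (simp add: u_def)
  have Qx: "\<xi>\<^sup>2+\<eta>\<^sup>2 > 0" using xi by (simp add: add_pos_nonneg)
  have Qu: "u\<^sup>2+\<eta>\<^sup>2 > 0" using eta by (simp add: add_nonneg_pos)
  have "\<alpha>*(u\<^sup>2+\<eta>\<^sup>2)*(\<xi>\<^sup>2+\<eta>\<^sup>2) = (u\<^sup>2+\<eta>\<^sup>2)*(\<alpha>*(\<xi>\<^sup>2+\<eta>\<^sup>2))"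
    by (simp add: algebra_simps)
  also have "\<dots> = (u\<^sup>2+\<eta>\<^sup>2)*(- d1 + P*(- C - \<xi>* S))" by (simp only: aQ)
  also have "\<dots> < (u\<^sup>2+\<eta>\<^sup>2)*(P*(- C - \<xi>* S))" using mult_pos_pos[OF Qu d1] by (simp add: algebra_simps)
  also have "\<dots> = P * ((- C - \<xi>* S) * (u\<^sup>2+\<eta>\<^sup>2))" by (simp add: algebra_simps)
  also have "\<dots> \<le> P * ((exp u - C - u* S) * (\<xi>\<^sup>2+\<eta>\<^sup>2))" using key P0 by (intro mult_left_mono) auto
  also have "\<dots> = (P*(exp u - C - u* S)) * (\<xi>\<^sup>2+\<eta>\<^sup>2)" by (simp add: algebra_simps)
  finally have A: "\<alpha>*(u\<^sup>2+\<eta>\<^sup>2) < P*(exp u - C - u* S)" using Qx by (simp add: mult_less_cancel_right)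
  have ex: "\<beta>*exp s = P*exp u" by (simp add: P_def u_def exp_add[symmetric])
  have "\<alpha>* s\<^sup>2 + \<epsilon>* s - d1 - \<beta>*exp s = \<alpha>*(u\<^sup>2+\<eta>\<^sup>2) - P*(exp u - C - u* S)"
    unfolding ex d1eq epsS by (simp add: u_def algebra_simps power2_eq_square)
  with A show ?thesis by linarith
qed

lemma bound_abs:
  fixes \<alpha> \<epsilon> d1 \<beta> \<xi> \<eta> :: real
  assumes be: "\<beta> > 0" and xi: "\<xi> > 0" and eta: "\<eta> \<noteq> 0"
    and I: "2*\<alpha>*\<xi>*\<eta> - \<epsilon>*\<eta> + \<beta>*exp(-\<xi>) * sin \<eta> = 0"
    and R: "\<alpha>*(\<xi>\<^sup>2-\<eta>\<^sup>2) - \<epsilon>*\<xi> - d1 - \<beta>*exp(-\<xi>)*cos \<eta> = 0"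
  shows "\<alpha>*(\<xi>\<^sup>2+\<eta>\<^sup>2) + d1 < \<beta>"
proof -
  define P where "P = \<beta>*exp(-\<xi>)"
  define S where "S = sin \<eta>/\<eta>"
  have P0: "P > 0" using be by (simp add: P_def)
  have aQ: "\<alpha>*(\<xi>\<^sup>2+\<eta>\<^sup>2) + d1 = - P*cos \<eta> - \<xi>*(P* S)"
    using IR_facts(2)[OF eta I R] by (simp add: P_def S_def algebra_simps)
  have "\<bar>sin \<eta>\<bar> \<le> \<bar>\<eta>\<bar>" by (rule abs_sin_x_le_abs_x)
  hence Sb: "\<bar>S\<bar> \<le> 1" using eta by (simp add: S_def abs_divide divide_le_eq)
  have "P*(- cos \<eta>) \<le> P*1" using P0 by (intro mult_left_mono) auto
  moreover have "P*(- S) \<le> P*1" using Sb P0 by (intro mult_left_mono) auto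
  hence "\<xi>*(P*(- S)) \<le> \<xi>*(P*1)" by (rule mult_left_mono) (use xi in simp)
  ultimately have "\<alpha>*(\<xi>\<^sup>2+\<eta>\<^sup>2) + d1 \<le> P*(1+\<xi>)" using aQ by (simp add: algebra_simps)
  also have "P*(1+\<xi>) < \<beta>"
  proof -
    have "1 + \<xi> + \<xi>\<^sup>2/2 \<le> exp \<xi>" using xi by (intro exp_lower_Taylor_quadratic) simp
    moreover have "\<xi>\<^sup>2/2 > 0" using xi by simp
    ultimately have "1 + \<xi> < exp \<xi>" by linarith
    hence "exp(-\<xi>)*(1+\<xi>) < exp(-\<xi>) * exp \<xi>" by (intro mult_strict_left_mono) auto
    also have "exp(-\<xi>) * exp \<xi> = 1" by (simp add: exp_minus field_simps)
    finally have "exp(-\<xi>)*(1+\<xi>) < 1" .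
    hence "\<beta>*(exp(-\<xi>)*(1+\<xi>)) < \<beta>*1" using be by (intro mult_strict_left_mono) auto
    thus ?thesis by (simp add: P_def mult.assoc)
  qed
  finally show ?thesis .
qed

lemma P2_abstract:
  fixes \<alpha> \<epsilon> d1 \<beta> \<xi> \<eta> :: real
  assumes be: "\<beta> > 0" and bd: "\<beta> \<le> d1" and al: "\<alpha> > 0" and xi: "\<xi> > 0" and eta: "\<eta> \<noteq> 0"
    and I: "2*\<alpha>*\<xi>*\<eta> - \<epsilon>*\<eta> + \<beta>*exp(-\<xi>) * sin \<eta> = 0"
    and R: "\<alpha>*(\<xi>\<^sup>2-\<eta>\<^sup>2) - \<epsilon>*\<xi> - d1 - \<beta>*exp(-\<xi>)*cos \<eta> = 0"
  shows False
proof -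
  have "\<alpha>*(\<xi>\<^sup>2+\<eta>\<^sup>2) > 0" using al xi by (intro mult_pos_pos add_pos_nonneg) auto
  with bound_abs[OF be xi eta I R] bd show False by linarith
qed

lemma P3_low_pos:
  fixes \<alpha>0 d1 \<beta> \<gamma> \<alpha> \<epsilon> \<xi> \<eta> :: real
  assumes d1: "d1 > 0" and bd: "\<beta> > d1" and a0: "\<alpha>0 > 0"
    and g0: "0 < \<gamma>" and gpi: "\<gamma> < pi/2"
    and gq: "(pi - \<gamma>)\<^sup>2 \<ge> (\<beta> - d1)/\<alpha>0"
    and al: "\<alpha> \<ge> \<alpha>0" and ep: "\<epsilon> > 0" and xi: "\<xi> > 0" and eta: "\<eta> > 0"
    and I: "2*\<alpha>*\<xi>*\<eta> - \<epsilon>*\<eta> + \<beta>*exp(-\<xi>) * sin \<eta> = 0"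
    and R: "\<alpha>*(\<xi>\<^sup>2-\<eta>\<^sup>2) - \<epsilon>*\<xi> - d1 - \<beta>*exp(-\<xi>)*cos \<eta> = 0"
    and ep1: "\<epsilon> \<le> 1"
  shows "\<epsilon> \<ge> \<beta>*exp(-(1/(2*\<alpha>0))) * sin \<gamma> / pi"
proof -
  have be: "\<beta> > 0" using d1 bd by linarith
  have apos: "\<alpha> > 0" using a0 al by linarith
  define P where "P = \<beta>*exp(-\<xi>)"
  define S where "S = sin \<eta>/\<eta>"
  have P0: "P > 0" using be by (simp add: P_def)
  have eps: "\<epsilon> = 2*\<alpha>*\<xi> + P* S" using IR_facts(1)[OF _ I R] eta by (simp add: P_def S_def)
  have aQ: "\<alpha>*(\<xi>\<^sup>2+\<eta>\<^sup>2) = - d1 - P*cos \<eta> - \<xi>*(P* S)"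
    using IR_facts(2)[OF _ I R] eta by (simp add: P_def S_def algebra_simps)
  have bnd: "\<alpha>*(\<xi>\<^sup>2+\<eta>\<^sup>2) + d1 < \<beta>" using bound_abs[OF be xi _ I R] eta by simp
  have "\<alpha>*\<eta>\<^sup>2 \<le> \<alpha>*(\<xi>\<^sup>2+\<eta>\<^sup>2)" using apos by (intro mult_left_mono) auto
  hence "\<alpha>*\<eta>\<^sup>2 < \<beta> - d1" using bnd by linarith
  hence "\<eta>\<^sup>2 < (\<beta> - d1)/\<alpha>" using apos by (simp add: field_simps)
  also have "\<dots> \<le> (\<beta> - d1)/\<alpha>0" using bd a0 al by (intro divide_left_mono) auto
  also have "\<dots> \<le> (pi - \<gamma>)\<^sup>2" by (rule gq)
  finally have "\<eta>\<^sup>2 < (pi - \<gamma>)\<^sup>2" .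
  hence etalt: "\<eta> < pi - \<gamma>" by (rule power_less_imp_less_base) (use gpi pi_gt_zero in linarith)
  have etapi2: "\<eta> > pi/2"
  proof (rule ccontr)
    assume "\<not> \<eta> > pi/2"
    hence "cos \<eta> \<ge> 0" "sin \<eta> \<ge> 0" using eta by (auto intro!: cos_ge_zero sin_ge_zero)
    hence "S \<ge> 0" using eta by (simp add: S_def)
    hence "P*cos \<eta> \<ge> 0" "\<xi>*(P* S) \<ge> 0" using P0 xi \<open>cos \<eta> \<ge> 0\<close> by auto
    hence "\<alpha>*(\<xi>\<^sup>2+\<eta>\<^sup>2) < 0" using aQ d1 by linarith
    moreover have "\<alpha>*(\<xi>\<^sup>2+\<eta>\<^sup>2) > 0" using apos eta by (intro mult_pos_pos add_nonneg_pos) auto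
    ultimately show False by linarith
  qed
  have sg: "sin \<gamma> \<le> sin \<eta>"
  proof -
    have "sin \<gamma> \<le> sin (pi - \<eta>)"
      using g0 gpi etalt etapi2 by (subst sin_mono_le_eq) auto
    thus ?thesis by simp
  qed
  have sgp: "sin \<gamma> > 0" using g0 gpi by (intro sin_gt_zero) auto
  have "S \<ge> sin \<gamma> / pi"
  proof -
    have "sin \<gamma> / pi \<le> sin \<eta> / pi" using sg by (simp add: divide_right_mono)
    also have "\<dots> \<le> sin \<eta> / \<eta>" using sg sgp eta etalt g0
      by (intro divide_left_mono) auto
    finally show ?thesis by (simp add: S_def)
  qed
  have S0: "S > 0" using \<open>S \<ge> sin \<gamma> / pi\<close> sgp by (smt (verit) divide_pos_pos pi_gt_zero)
  have "2*\<alpha>*\<xi> \<le> \<epsilon>" using eps P0 S0 by (smt (verit) mult_pos_pos)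
  hence "\<xi> \<le> 1/(2*\<alpha>0)" using ep1 apos a0 al xi
    by (smt (verit, ccfv_threshold) divide_right_mono le_divide_eq_1_pos mult_le_cancel_left_pos nonzero_mult_div_cancel_left pos_le_divide_eq zero_less_mult_iff)
  hence "P \<ge> \<beta>*exp(-(1/(2*\<alpha>0)))" using be by (simp add: P_def)
  hence "P* S \<ge> \<beta>*exp(-(1/(2*\<alpha>0))) * (sin \<gamma> / pi)"
    using \<open>S \<ge> sin \<gamma> / pi\<close> sgp P0 by (intro mult_mono) auto
  moreover have "P* S \<le> \<epsilon>" using eps apos xi by (smt (verit) mult_pos_pos)
  ultimately show ?thesis by simp
qed

lemma P3_low:
  fixes \<alpha>0 d1 \<beta> :: real
  assumes d1: "d1 > 0" and bd: "\<beta> > d1" and a0: "\<alpha>0 > (\<beta> - d1)/pi\<^sup>2"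
  shows "\<exists>\<epsilon>0>0. \<forall>\<epsilon> \<alpha> \<xi> \<eta>. 0 < \<epsilon> \<longrightarrow> \<epsilon> < \<epsilon>0 \<longrightarrow> \<alpha> \<ge> \<alpha>0 \<longrightarrow> \<xi> > 0 \<longrightarrow> \<eta> \<noteq> 0 \<longrightarrow>
     2*\<alpha>*\<xi>*\<eta> - \<epsilon>*\<eta> + \<beta>*exp(-\<xi>) * sin \<eta> = 0 \<longrightarrow>
     \<alpha>*(\<xi>\<^sup>2-\<eta>\<^sup>2) - \<epsilon>*\<xi> - d1 - \<beta>*exp(-\<xi>)*cos \<eta> = 0 \<longrightarrow> False"
proof -
  have bdp: "(\<beta> - d1)/pi\<^sup>2 > 0" using bd by simp
  hence a0p: "\<alpha>0 > 0" using a0 by linarith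
  define q where "q = sqrt ((\<beta> - d1)/\<alpha>0)"
  have qsq: "q\<^sup>2 = (\<beta> - d1)/\<alpha>0" using bd a0p by (simp add: q_def)
  have qp: "q > 0" using bd a0p by (simp add: q_def)
  have "(\<beta> - d1)/\<alpha>0 < pi\<^sup>2" using a0 a0p bd by (simp add: field_simps)
  hence "q\<^sup>2 < pi\<^sup>2" using qsq by simp
  hence qpi: "q < pi" by (rule power_less_imp_less_base) simp
  define \<gamma> where "\<gamma> = (pi - q)/2"
  have g0: "\<gamma> > 0" "\<gamma> < pi/2" using qpi qp by (auto simp: \<gamma>_def)
  have "q \<le> pi - \<gamma>" using qpi unfolding \<gamma>_def by (simp add: field_simps)
  hence gq: "(pi - \<gamma>)\<^sup>2 \<ge> (\<beta> - d1)/\<alpha>0" using qp qsq by (metis power_mono less_imp_le)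
  define \<epsilon>0 where "\<epsilon>0 = min 1 (\<beta>*exp(-(1/(2*\<alpha>0))) * sin \<gamma> / pi)"
  have "sin \<gamma> > 0" using g0 by (intro sin_gt_zero) auto
  hence e0: "\<epsilon>0 > 0" using bd d1 by (simp add: \<epsilon>0_def)
  have main: False if ep: "0 < \<epsilon>" "\<epsilon> < \<epsilon>0" and al: "\<alpha> \<ge> \<alpha>0" and xi: "\<xi> > 0" and eta: "\<eta> > 0"
    and I: "2*\<alpha>*\<xi>*\<eta> - \<epsilon>*\<eta> + \<beta>*exp(-\<xi>) * sin \<eta> = 0"
    and R: "\<alpha>*(\<xi>\<^sup>2-\<eta>\<^sup>2) - \<epsilon>*\<xi> - d1 - \<beta>*exp(-\<xi>)*cos \<eta> = 0" for \<epsilon> \<alpha> \<xi> \<eta>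
  proof -
    have "\<epsilon> \<le> 1" using ep by (simp add: \<epsilon>0_def)
    from P3_low_pos[OF d1 bd a0p g0 gq al ep(1) xi eta I R this]
    have "\<epsilon> \<ge> \<beta>*exp(-(1/(2*\<alpha>0))) * sin \<gamma> / pi" .
    moreover have "\<epsilon> < \<beta>*exp(-(1/(2*\<alpha>0))) * sin \<gamma> / pi" using ep by (simp add: \<epsilon>0_def)
    ultimately show False by linarith
  qed
  show ?thesis
  proof (intro exI[of _ \<epsilon>0] conjI allI impI e0)
    fix \<epsilon> \<alpha> \<xi> \<eta> :: real
    assume ep: "0 < \<epsilon>" "\<epsilon> < \<epsilon>0" and al: "\<alpha> \<ge> \<alpha>0" and xi: "\<xi> > 0" and eta: "\<eta> \<noteq> 0"
      and I: "2*\<alpha>*\<xi>*\<eta> - \<epsilon>*\<eta> + \<beta>*exp(-\<xi>) * sin \<eta> = 0"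
      and R: "\<alpha>*(\<xi>\<^sup>2-\<eta>\<^sup>2) - \<epsilon>*\<xi> - d1 - \<beta>*exp(-\<xi>)*cos \<eta> = 0"
    show False
    proof (cases "\<eta> > 0")
      case True
      show ?thesis using main[OF ep al xi True I R] .
    next
      case False
      hence n: "- \<eta> > 0" using eta by linarith
      have I': "2*\<alpha>*\<xi>*(-\<eta>) - \<epsilon>*(-\<eta>) + \<beta>*exp(-\<xi>) * sin (-\<eta>) = 0" using I by simp
      have R': "\<alpha>*(\<xi>\<^sup>2-(-\<eta>)\<^sup>2) - \<epsilon>*\<xi> - d1 - \<beta>*exp(-\<xi>)*cos (-\<eta>) = 0" using R by simp
      show ?thesis using main[OF ep al xi n I' R'] .
    qed
  qed
qed

lemma at_right_pick:
  assumes ev: "eventually P (at_right (0::real))" and b: "b > 0"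
  shows "\<exists>x>0. x \<le> b \<and> P x"
proof -
  from ev obtain b' where b': "b' > 0" "\<And>y. y > 0 \<Longrightarrow> y < b' \<Longrightarrow> P y"
    unfolding eventually_at_right_field by auto
  show ?thesis using b' b by (intro exI[of _ "min (b'/2) b"]) auto
qed

lemma P3_up:
  fixes T d1 \<beta> :: real
  assumes d1: "d1 > 0" and bd: "\<beta> > d1" and T0: "T > 0" and Tlt: "T < (\<beta> - d1)/pi\<^sup>2"
  shows "\<exists>\<epsilon>0>0. \<forall>\<epsilon>. 0 < \<epsilon> \<longrightarrow> \<epsilon> \<le> \<epsilon>0 \<longrightarrow> (\<exists>\<alpha> \<xi> \<eta>. \<alpha> \<ge> T \<and> \<xi> > 0 \<and> \<eta> > 0 \<and>
     2*\<alpha>*\<xi>*\<eta> - \<epsilon>*\<eta> + \<beta>*exp(-\<xi>) * sin \<eta> = 0 \<and>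
     \<alpha>*(\<xi>\<^sup>2-\<eta>\<^sup>2) - \<epsilon>*\<xi> - d1 - \<beta>*exp(-\<xi>)*cos \<eta> = 0)"
proof -
  have be: "\<beta> > 0" using d1 bd by linarith
  have "((\<lambda>\<gamma>. (\<beta> * cos \<gamma> - d1)/(pi+\<gamma>)\<^sup>2) \<longlongrightarrow> (\<beta> * cos 0 - d1)/(pi+0)\<^sup>2) (at_right 0)"
    by (intro tendsto_intros) auto
  hence "((\<lambda>\<gamma>. (\<beta> * cos \<gamma> - d1)/(pi+\<gamma>)\<^sup>2) \<longlongrightarrow> (\<beta> - d1)/pi\<^sup>2) (at_right 0)" by simp
  from order_tendstoD(1)[OF this Tlt]
  obtain \<gamma> where g: "\<gamma> > 0" "\<gamma> \<le> 1" "T < (\<beta> * cos \<gamma> - d1)/(pi+\<gamma>)\<^sup>2"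
    using at_right_pick[of _ 1] by auto
  have sgp: "sin \<gamma> > 0" using g pi_gt3 by (intro sin_gt_zero) auto
  have pg0: "pi + \<gamma> > 0" using g pi_gt_zero by linarith
  have e1: "\<forall>\<^sub>F \<xi> in at_right 0. T < (\<beta> * exp(-\<xi>) * cos \<gamma> - d1)/(pi+\<gamma>)\<^sup>2"
  proof -
    have "((\<lambda>\<xi>. (\<beta> * exp(-\<xi>) * cos \<gamma> - d1)/(pi+\<gamma>)\<^sup>2) \<longlongrightarrow> (\<beta> * exp(-0) * cos \<gamma> - d1)/(pi+\<gamma>)\<^sup>2) (at_right 0)"
    proof -
      have "pi + \<gamma> \<noteq> 0" using g pi_gt_zero by linarith
      thus ?thesis by (intro tendsto_intros) auto
    qed
    hence "((\<lambda>\<xi>. (\<beta> * exp(-\<xi>) * cos \<gamma> - d1)/(pi+\<gamma>)\<^sup>2) \<longlongrightarrow> (\<beta> * cos \<gamma> - d1)/(pi+\<gamma>)\<^sup>2) (at_right 0)" by simp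
    from order_tendstoD(1)[OF this g(3)] show ?thesis .
  qed
  have e2: "\<forall>\<^sub>F \<xi> in at_right 0. 0 < sin \<gamma> * ((pi+\<gamma>)\<^sup>2 - \<xi>\<^sup>2) - 2*\<xi>*(pi+\<gamma>)"
  proof -
    have "((\<lambda>\<xi>. sin \<gamma> * ((pi+\<gamma>)\<^sup>2 - \<xi>\<^sup>2) - 2*\<xi>*(pi+\<gamma>)) \<longlongrightarrow> sin \<gamma> * ((pi+\<gamma>)\<^sup>2 - 0\<^sup>2) - 2*0*(pi+\<gamma>)) (at_right 0)"
      by (intro tendsto_intros)
    moreover have "0 < sin \<gamma> * ((pi+\<gamma>)\<^sup>2 - 0\<^sup>2) - 2*0*(pi+\<gamma>)" using sgp pg0 by simp
    ultimately show ?thesis by (rule order_tendstoD(1))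
  qed
  from at_right_pick[OF eventually_conj[OF e1 e2], of 1]
  obtain \<xi> where xi: "\<xi> > 0" "\<xi> \<le> 1" and x1: "T < (\<beta> * exp(-\<xi>) * cos \<gamma> - d1)/(pi+\<gamma>)\<^sup>2"
    and x2: "0 < sin \<gamma> * ((pi+\<gamma>)\<^sup>2 - \<xi>\<^sup>2) - 2*\<xi>*(pi+\<gamma>)" by auto
  define P where "P = \<beta> * exp(-\<xi>)"
  have P0: "P > 0" using be by (simp add: P_def)
  have pg: "(pi+\<gamma>)\<^sup>2 > 0" using pg0 by simp
  have x1': "T*(pi+\<gamma>)\<^sup>2 < P * cos \<gamma> - d1" using x1 pg by (simp add: P_def field_simps)
  have Tpg: "T*(pi+\<gamma>)\<^sup>2 > 0" using T0 pg by simp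
  have "P * cos \<gamma> \<le> P" using P0 by (simp add: mult_le_cancel_left1)
  hence Pd: "P > d1" using x1' Tpg by linarith
  define K1 where "K1 = (pi\<^sup>2 - \<xi>\<^sup>2)/(2*\<xi>) + \<xi>"
  have xipi: "\<xi> < pi" using xi pi_gt3 by linarith
  have "\<xi>\<^sup>2 < pi\<^sup>2" using xi xipi by (intro power_strict_mono) auto
  hence "(pi\<^sup>2 - \<xi>\<^sup>2)/(2*\<xi>) > 0" using xi by (intro divide_pos_pos) auto
  hence K1p: "K1 > 0" using xi by (simp add: K1_def)
  define \<epsilon>0 where "\<epsilon>0 = min ((P - d1)/(2*K1)) ((P * cos \<gamma> - d1 - T*(pi+\<gamma>)\<^sup>2)/\<xi>)"
  have e0: "\<epsilon>0 > 0" using Pd K1p x1' xi by (simp add: \<epsilon>0_def)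
  show ?thesis
  proof (rule exI[of _ \<epsilon>0], intro conjI allI impI e0)
    fix \<epsilon> :: real assume ep: "0 < \<epsilon>" "\<epsilon> \<le> \<epsilon>0"
    have ep1: "\<epsilon> * K1 \<le> (P - d1)/2" using ep K1p by (simp add: \<epsilon>0_def field_simps)
    have ep2: "\<epsilon> * \<xi> \<le> P * cos \<gamma> - d1 - T*(pi+\<gamma>)\<^sup>2" using ep xi by (simp add: \<epsilon>0_def field_simps)
    define G where "G \<eta> = ((\<epsilon> - P * (sin \<eta> / \<eta>))/(2*\<xi>))*(\<xi>\<^sup>2 - \<eta>\<^sup>2) - \<epsilon>*\<xi> - d1 - P*cos \<eta>" for \<eta>
    have Gpi: "G pi \<ge> 0"
    proof -
      have "G pi = - (\<epsilon> * K1) - d1 + P" using xi by (simp add: G_def K1_def field_simps power2_eq_square)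
      moreover have "- (\<epsilon> * K1) - d1 + P \<ge> 0"
      proof -
        have "2 * (\<epsilon> * K1) \<le> P - d1" using ep1 by simp
        thus ?thesis using Pd by simp
      qed
      ultimately show ?thesis by simp
    qed
    define \<eta>1 where "\<eta>1 = pi + \<gamma>"
    have eta1p: "\<eta>1 > 0" using g by (simp add: \<eta>1_def add_pos_pos)
    have Geta1: "G \<eta>1 \<le> 0"
    proof -
      have s1: "sin \<eta>1 = - sin \<gamma>" by (simp add: \<eta>1_def sin_add)
      have "2*\<xi>*(pi+\<gamma>) > 0" using xi pg0 by simp
      hence "sin \<gamma> * ((pi+\<gamma>)\<^sup>2 - \<xi>\<^sup>2) > 0" using x2 by linarith
      hence "(pi+\<gamma>)\<^sup>2 - \<xi>\<^sup>2 > 0" using sgp by (simp add: zero_less_mult_iff)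
      hence neg: "\<xi>\<^sup>2 - \<eta>1\<^sup>2 < 0" by (simp add: \<eta>1_def)
      have "(\<epsilon> - P * (sin \<eta>1 / \<eta>1))/(2*\<xi>) \<ge> (P * sin \<gamma> / \<eta>1)/(2*\<xi>)"
        using ep xi s1 by (intro divide_right_mono) auto
      hence "((\<epsilon> - P * (sin \<eta>1 / \<eta>1))/(2*\<xi>))*(\<xi>\<^sup>2 - \<eta>1\<^sup>2) \<le> ((P * sin \<gamma> / \<eta>1)/(2*\<xi>))*(\<xi>\<^sup>2 - \<eta>1\<^sup>2)"
        using neg by (intro mult_right_mono_neg) auto
      also have "\<dots> = - P * ((sin \<gamma> * (\<eta>1\<^sup>2 - \<xi>\<^sup>2)) / (2*\<xi>*\<eta>1))" using xi eta1p by (simp add: field_simps)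
      also have "\<dots> \<le> - P * 1"
      proof -
        have "2*\<xi>*\<eta>1 < sin \<gamma> * (\<eta>1\<^sup>2 - \<xi>\<^sup>2)" using x2 by (simp add: \<eta>1_def)
        hence "1 \<le> (sin \<gamma> * (\<eta>1\<^sup>2 - \<xi>\<^sup>2)) / (2*\<xi>*\<eta>1)" using xi eta1p by (simp add: le_divide_eq)
        hence "P * 1 \<le> P * ((sin \<gamma> * (\<eta>1\<^sup>2 - \<xi>\<^sup>2)) / (2*\<xi>*\<eta>1))" using P0 by (intro mult_left_mono) auto
        thus ?thesis by (simp only: mult_minus_left)
      qed
      finally have A: "((\<epsilon> - P * (sin \<eta>1 / \<eta>1))/(2*\<xi>))*(\<xi>\<^sup>2 - \<eta>1\<^sup>2) \<le> - P" by simp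
      have "P * (- cos \<eta>1) \<le> P * 1" by (rule mult_left_mono) (use P0 in auto)
      hence "- P * cos \<eta>1 \<le> P" by simp
      moreover have "\<epsilon>*\<xi> \<ge> 0" using ep xi by simp
      ultimately show ?thesis using A d1 unfolding G_def by linarith
    qed
    have cont: "continuous_on {pi..\<eta>1} G"
    proof -
      have xn: "2 * \<xi> \<noteq> 0" using xi by simp
      have nz: "\<And>x. x \<in> {pi..\<eta>1} \<Longrightarrow> x \<noteq> 0" using pi_gt_zero by fastforce
      show ?thesis unfolding G_def using xn nz by (intro continuous_intros) auto
    qed
    have "pi \<le> \<eta>1" using g by (simp add: \<eta>1_def)
    from IVT2'[of G \<eta>1 0 pi, OF Geta1 Gpi this cont]
    obtain \<eta> where eta: "pi \<le> \<eta>" "\<eta> \<le> \<eta>1" "G \<eta> = 0" by auto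
    have etap: "\<eta> > 0" using eta(1) pi_gt_zero by linarith
    define \<alpha> where "\<alpha> = (\<epsilon> - P * (sin \<eta> / \<eta>))/(2*\<xi>)"
    have I: "2*\<alpha>*\<xi>*\<eta> - \<epsilon>*\<eta> + \<beta>*exp(-\<xi>) * sin \<eta> = 0"
      using xi etap by (simp add: \<alpha>_def P_def field_simps)
    have R: "\<alpha>*(\<xi>\<^sup>2-\<eta>\<^sup>2) - \<epsilon>*\<xi> - d1 - \<beta>*exp(-\<xi>)*cos \<eta> = 0"
      using eta(3) by (simp add: G_def \<alpha>_def P_def)
    have cg: "- cos \<eta> \<ge> cos \<gamma>"
    proof -
      have "cos (\<eta> - pi) = - cos \<eta>" by (simp add: cos_diff)
      moreover have "cos \<gamma> \<le> cos (\<eta> - pi)"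
        using eta g pi_gt3 by (intro cos_monotone_0_pi_le) (auto simp: \<eta>1_def)
      ultimately show ?thesis by simp
    qed
    have "\<eta>\<^sup>2 \<ge> pi\<^sup>2" using eta(1) pi_gt_zero by (intro power_mono) auto
    hence d: "\<eta>\<^sup>2 - \<xi>\<^sup>2 > 0" using \<open>\<xi>\<^sup>2 < pi\<^sup>2\<close> by linarith
    have "\<eta>\<^sup>2 \<le> (pi+\<gamma>)\<^sup>2" using eta etap by (intro power_mono) (auto simp: \<eta>1_def)
    hence d2: "\<eta>\<^sup>2 - \<xi>\<^sup>2 \<le> (pi+\<gamma>)\<^sup>2" using zero_le_power2[of \<xi>] by linarith
    have "\<alpha>*(\<eta>\<^sup>2-\<xi>\<^sup>2) = - \<epsilon>*\<xi> - d1 - P * cos \<eta>" using R by (simp add: P_def algebra_simps)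
    also have "\<dots> \<ge> - \<epsilon>*\<xi> - d1 + P * cos \<gamma>"
    proof -
      have "P * cos \<gamma> \<le> P * (- cos \<eta>)" by (rule mult_left_mono) (use cg P0 in auto)
      thus ?thesis by simp
    qed
    finally have "\<alpha>*(\<eta>\<^sup>2-\<xi>\<^sup>2) \<ge> T*(pi+\<gamma>)\<^sup>2" using ep2 by linarith
    moreover have "T*(pi+\<gamma>)\<^sup>2 \<ge> T*(\<eta>\<^sup>2-\<xi>\<^sup>2)" using d2 T0 by (intro mult_left_mono) auto
    ultimately have "\<alpha>*(\<eta>\<^sup>2-\<xi>\<^sup>2) \<ge> T*(\<eta>\<^sup>2-\<xi>\<^sup>2)" by linarith
    hence "\<alpha> \<ge> T" using d by (simp add: mult_le_cancel_right)
    thus "\<exists>\<alpha> \<xi> \<eta>. \<alpha> \<ge> T \<and> \<xi> > 0 \<and> \<eta> > 0 \<and>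
     2*\<alpha>*\<xi>*\<eta> - \<epsilon>*\<eta> + \<beta>*exp(-\<xi>) * sin \<eta> = 0 \<and>
     \<alpha>*(\<xi>\<^sup>2-\<eta>\<^sup>2) - \<epsilon>*\<xi> - d1 - \<beta>*exp(-\<xi>)*cos \<eta> = 0"
      using xi etap I R by blast
  qed
qed


lemma chi_star_ReIm:
  fixes D m kappa B d1 r c :: real and z :: complex
  defines "a \<equiv> D * (1 / c\<^sup>2) * m * kappa powr (m - 1)"
  shows "Re (chi_star D m kappa B d1 r c z) = a * ((Re z)\<^sup>2 - (Im z)\<^sup>2) - Re z - d1 + B * exp (- (Re z * r)) * cos (Im z * r)"
    and "Im (chi_star D m kappa B d1 r c z) = 2 * a * Re z * Im z - Im z - B * exp (- (Re z * r)) * sin (Im z * r)"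
  by (simp_all add: chi_star_def a_def Re_exp Im_exp power2_eq_square algebra_simps)

lemma bridge:
  fixes D m kappa B d1 r c :: real and z :: complex
  assumes r: "r > 0" and c: "c > 0" and z: "chi_star D m kappa B d1 r c z = 0"
  defines "A \<equiv> D * m * kappa powr (m - 1)"
  defines "\<alpha> \<equiv> A / (c * r)\<^sup>2" and "\<xi> \<equiv> Re z * r" and "\<eta> \<equiv> Im z * r"
  shows "2*\<alpha>*\<xi>*\<eta> - (1/r)*\<eta> + (-B)*exp(-\<xi>) * sin \<eta> = 0"
    and "\<alpha>*(\<xi>\<^sup>2-\<eta>\<^sup>2) - (1/r)*\<xi> - d1 - (-B)*exp(-\<xi>)*cos \<eta> = 0"
proof -
  have re: "Re (chi_star D m kappa B d1 r c z) = 0" and im: "Im (chi_star D m kappa B d1 r c z) = 0"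
    using z by simp_all
  have "2*\<alpha>*\<xi>*\<eta> - (1/r)*\<eta> + (-B)*exp(-\<xi>) * sin \<eta> = Im (chi_star D m kappa B d1 r c z)"
    unfolding chi_star_ReIm using r c by (simp add: \<alpha>_def \<xi>_def \<eta>_def A_def field_simps power2_eq_square)
  thus "2*\<alpha>*\<xi>*\<eta> - (1/r)*\<eta> + (-B)*exp(-\<xi>) * sin \<eta> = 0" using im by simp
  have "\<alpha>*(\<xi>\<^sup>2-\<eta>\<^sup>2) - (1/r)*\<xi> - d1 - (-B)*exp(-\<xi>)*cos \<eta> = Re (chi_star D m kappa B d1 r c z)"
    unfolding chi_star_ReIm using r c by (simp add: \<alpha>_def \<xi>_def \<eta>_def A_def field_simps power2_eq_square)
  thus "\<alpha>*(\<xi>\<^sup>2-\<eta>\<^sup>2) - (1/r)*\<xi> - d1 - (-B)*exp(-\<xi>)*cos \<eta> = 0" using re by simp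
qed

lemma bridge_back:
  fixes D m kappa B d1 r \<alpha> \<xi> \<eta> :: real
  assumes r: "r > 0" and al: "\<alpha> > 0" and A: "D * m * kappa powr (m - 1) > 0"
    and I: "2*\<alpha>*\<xi>*\<eta> - (1/r)*\<eta> + (-B)*exp(-\<xi>) * sin \<eta> = 0"
    and R: "\<alpha>*(\<xi>\<^sup>2-\<eta>\<^sup>2) - (1/r)*\<xi> - d1 - (-B)*exp(-\<xi>)*cos \<eta> = 0"
  shows "chi_star D m kappa B d1 r (sqrt (D * m * kappa powr (m - 1) / \<alpha>) / r) (Complex (\<xi>/r) (\<eta>/r)) = 0"
proof -
  define A where "A = D * m * kappa powr (m - 1)"
  define c where "c = sqrt (A / \<alpha>) / r"
  have Ap: "A > 0" using A by (simp add: A_def)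
  have csq: "c\<^sup>2 = A / (\<alpha> * r\<^sup>2)" using Ap al r by (simp add: c_def power_divide)
  have cp: "c > 0" using Ap al r by (simp add: c_def)
  have coef: "D * (1 / c\<^sup>2) * m * kappa powr (m - 1) = \<alpha> * r\<^sup>2"
  proof -
    have "D * (1 / c\<^sup>2) * m * kappa powr (m - 1) = A / c\<^sup>2" by (simp add: A_def)
    also have "\<dots> = \<alpha> * r\<^sup>2" using csq Ap al r cp by (simp add: field_simps)
    finally show ?thesis .
  qed
  let ?z = "Complex (\<xi>/r) (\<eta>/r)"
  have "Re (chi_star D m kappa B d1 r c ?z) = \<alpha>*(\<xi>\<^sup>2-\<eta>\<^sup>2) - (1/r)*\<xi> - d1 - (-B)*exp(-\<xi>)*cos \<eta>"
    unfolding chi_star_ReIm coef using r by (simp add: field_simps power2_eq_square)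
  moreover have "Im (chi_star D m kappa B d1 r c ?z) = 2*\<alpha>*\<xi>*\<eta> - (1/r)*\<eta> + (-B)*exp(-\<xi>) * sin \<eta>"
    unfolding chi_star_ReIm coef using r by (simp add: field_simps power2_eq_square)
  ultimately have "chi_star D m kappa B d1 r c ?z = 0" using I R by (simp add: complex_eq_iff)
  thus ?thesis by (simp add: c_def A_def)
qed

lemma c_star_ge:
  assumes "\<And>c. 0 < c \<Longrightarrow> ereal c < c0 \<Longrightarrow> no_bad_roots D m kappa B d1 r c"
  shows "c0 \<le> c_star D m kappa B d1 r"
  unfolding c_star_def using assms by (intro Sup_upper) auto

lemma c_star_le:
  assumes "c > 0" and "\<not> no_bad_roots D m kappa B d1 r c"
  shows "c_star D m kappa B d1 r \<le> ereal c"
  unfolding c_star_def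
proof (rule Sup_least)
  fix c0 assume "c0 \<in> {c0. \<forall>c. 0 < c \<and> ereal c < c0 \<longrightarrow> no_bad_roots D m kappa B d1 r c}"
  hence h: "\<And>c'. 0 < c' \<Longrightarrow> ereal c' < c0 \<Longrightarrow> no_bad_roots D m kappa B d1 r c'" by auto
  show "c0 \<le> ereal c"
  proof (rule ccontr)
    assume "\<not> c0 \<le> ereal c"
    hence "ereal c < c0" by simp
    with h assms show False by blast
  qed
qed


lemma P1_main:
  fixes D m kappa B d1 r c c2 :: real
  assumes r: "r > 0" and A: "D * m * kappa powr (m - 1) > 0" and B: "B < 0" and d1: "d1 > 0"
    and c: "0 < c" "c \<le> c2" and three: "three_real_roots D m kappa B d1 r c2"
  shows "no_bad_roots D m kappa B d1 r c"
  unfolding no_bad_roots_def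
proof (intro allI impI)
  fix z assume rez: "Re z > 0" and z: "chi_star D m kappa B d1 r c z = 0"
  define A where "A = D * m * kappa powr (m - 1)"
  have Ap: "A > 0" using A by (simp add: A_def)
  from three obtain l1 l2 l3 where l: "l1 \<le> l2" "l2 < 0" and ch: "chi_kappa D m kappa B d1 r c2 l1 = 0"
    unfolding three_real_roots_def by blast
  have l1: "l1 < 0" using l by linarith
  have c2p: "c2 > 0" using c by linarith
  have chk: "A * l1\<^sup>2 + B * exp (- l1 * c2 * r) - c2 * l1 - d1 = 0" using ch by (simp add: chi_kappa_def A_def)
  show "Im z = 0"
  proof (rule ccontr)
    assume imz: "Im z \<noteq> 0"
    define \<alpha> where "\<alpha> = A / (c * r)\<^sup>2"
    define \<xi> where "\<xi> = Re z * r"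
    define \<eta> where "\<eta> = Im z * r"
    have I: "2*\<alpha>*\<xi>*\<eta> - (1/r)*\<eta> + (-B)*exp(-\<xi>) * sin \<eta> = 0"
      using bridge(1)[OF r c(1) z] by (simp add: \<alpha>_def \<xi>_def \<eta>_def A_def)
    have R: "\<alpha>*(\<xi>\<^sup>2-\<eta>\<^sup>2) - (1/r)*\<xi> - d1 - (-B)*exp(-\<xi>)*cos \<eta> = 0"
      using bridge(2)[OF r c(1) z] by (simp add: \<alpha>_def \<xi>_def \<eta>_def A_def)
    have xi: "\<xi> > 0" using rez r by (simp add: \<xi>_def)
    have eta: "\<eta> \<noteq> 0" using imz r by (simp add: \<eta>_def)
    define s where "s = - l1 * c2 * r"
    have "(- l1) * c2 * r > 0" using l1 c2p r by (intro mult_pos_pos) auto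
    hence sp: "s > 0" by (simp add: s_def)
    have "\<alpha>* s\<^sup>2 + (1/r)* s < d1 + (-B)*exp s"
      using P1_abstract[OF d1 _ xi eta sp I R] B by simp
    moreover have "\<alpha>* s\<^sup>2 \<ge> A * l1\<^sup>2"
    proof -
      have "\<alpha>* s\<^sup>2 = A * l1\<^sup>2 * (c2\<^sup>2 / c\<^sup>2)" using r c by (simp add: \<alpha>_def s_def field_simps power2_eq_square)
      moreover have "c2\<^sup>2 / c\<^sup>2 \<ge> 1" using c by (simp add: power_mono)
      moreover have "A * l1\<^sup>2 \<ge> 0" using Ap by simp
      ultimately show ?thesis by (metis mult_left_mono mult.right_neutral)
    qed
    moreover have "(1/r)* s = - (c2 * l1)" using r by (simp add: s_def)
    moreover have "(-B) * exp s = - (B * exp (- l1 * c2 * r))" by (simp add: s_def)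
    ultimately show False using chk by linarith
  qed
qed

lemma P2_main:
  fixes D m kappa B d1 r c :: real
  assumes r: "r > 0" and A: "D * m * kappa powr (m - 1) > 0" and B: "B < 0" and Bd: "B \<ge> - d1"
    and c: "0 < c"
  shows "no_bad_roots D m kappa B d1 r c"
  unfolding no_bad_roots_def
proof (intro allI impI)
  fix z assume rez: "Re z > 0" and z: "chi_star D m kappa B d1 r c z = 0"
  define A where "A = D * m * kappa powr (m - 1)"
  have Ap: "A > 0" using A by (simp add: A_def)
  show "Im z = 0"
  proof (rule ccontr)
    assume imz: "Im z \<noteq> 0"
    define \<alpha> where "\<alpha> = A / (c * r)\<^sup>2"
    define \<xi> where "\<xi> = Re z * r"
    define \<eta> where "\<eta> = Im z * r"
    have I: "2*\<alpha>*\<xi>*\<eta> - (1/r)*\<eta> + (-B)*exp(-\<xi>) * sin \<eta> = 0"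
      using bridge(1)[OF r c(1) z] by (simp add: \<alpha>_def \<xi>_def \<eta>_def A_def)
    have R: "\<alpha>*(\<xi>\<^sup>2-\<eta>\<^sup>2) - (1/r)*\<xi> - d1 - (-B)*exp(-\<xi>)*cos \<eta> = 0"
      using bridge(2)[OF r c(1) z] by (simp add: \<alpha>_def \<xi>_def \<eta>_def A_def)
    have xi: "\<xi> > 0" using rez r by (simp add: \<xi>_def)
    have eta: "\<eta> \<noteq> 0" using imz r by (simp add: \<eta>_def)
    have al: "\<alpha> > 0" using Ap c r by (simp add: \<alpha>_def)
    show False using P2_abstract[OF _ _ al xi eta I R] B Bd by simp
  qed
qed

theorem lemma6p4:
  fixes D m kappa sM :: real and b d b' d' d'' :: "real \<Rightarrow> real"
  assumes m: "m > 1" and D: "D > 0"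
    \<comment> \<open>d in C^2([0,+\<infinity>)) with derivatives d', d''\<close>
    and d_deriv: "\<And>s. s \<ge> 0 \<Longrightarrow> (d has_real_derivative d' s) (at s within {0..})"
    and d'_deriv: "\<And>s. s \<ge> 0 \<Longrightarrow> (d' has_real_derivative d'' s) (at s within {0..})"
    and d''_cont: "continuous_on {0..} d''"
    and d0: "d 0 = 0"
    and d'_pos: "\<And>s. s > 0 \<Longrightarrow> d' s > 0"
    and d''_nonneg: "\<And>s. s > 0 \<Longrightarrow> d'' s \<ge> 0"
    \<comment> \<open>b in C^1([0,+\<infinity>);[0,+\<infinity>)) with derivative b'\<close>
    and b_deriv: "\<And>s. s \<ge> 0 \<Longrightarrow> (b has_real_derivative b' s) (at s within {0..})"
    and b'_cont: "continuous_on {0..} b'"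
    and b_nonneg: "\<And>s. s \<ge> 0 \<Longrightarrow> b s \<ge> 0"
    \<comment> \<open>sM is the unique positive local extremum point, and the global maximum point\<close>
    and sM_pos: "sM > 0"
    and sM_extr: "loc_extremum b sM"
    and sM_max: "\<And>s. s \<ge> 0 \<Longrightarrow> b s \<le> b sM"
    and sM_unique: "\<And>s. s > 0 \<Longrightarrow> loc_extremum b s \<Longrightarrow> s = sM"
    and b0: "b 0 = 0"
    and kappa: "kappa > 0"
    and b_kappa: "b kappa = d kappa"
    and b'0: "b' 0 > d' 0"
    and b'kappa: "b' kappa < d' kappa"
    and between: "\<And>s. 0 < s \<Longrightarrow> s < kappa \<Longrightarrow> d s < b s \<and> b s \<le> b' 0 * s"
    and sM_kappa: "sM < kappa"
    \<comment> \<open>hypothesis of the lemma\<close>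
    and b'kappa_neg: "b' kappa < 0"
  shows "(\<forall>r>0. c_star D m kappa (b' kappa) (d' kappa) r \<ge> c_kappa D m kappa (b' kappa) (d' kappa) r)
    \<and> (b' kappa \<ge> - d' kappa \<longrightarrow>
         (\<exists>R>0. \<forall>r\<ge>R. c_star D m kappa (b' kappa) (d' kappa) r = \<infinity>))
    \<and> (b' kappa < - d' kappa \<longrightarrow>
         ((\<lambda>r. ereal r * c_star D m kappa (b' kappa) (d' kappa) r)
            \<longlongrightarrow> ereal (mu_star D m kappa (b' kappa) (d' kappa))) at_top)"
  proof -
  define A where "A = D * m * kappa powr (m - 1)"
  define B where "B = b' kappa"
  define d1 where "d1 = d' kappa"
  have Ap: "A > 0" using D m kappa by (simp add: A_def)
  have Ap': "D * m * kappa powr (m - 1) > 0" using Ap by (simp add: A_def)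
  have Bn: "B < 0" using b'kappa_neg by (simp add: B_def)
  have d1p: "d1 > 0" using d'_pos[OF kappa] by (simp add: d1_def)
  have part1: "\<forall>r>0. c_star D m kappa B d1 r \<ge> c_kappa D m kappa B d1 r"
  proof (intro allI impI)
    fix r :: real assume r: "r > 0"
    show "c_kappa D m kappa B d1 r \<le> c_star D m kappa B d1 r"
      unfolding c_kappa_def
    proof (rule Sup_least)
      fix x assume "x \<in> {ereal c |c. c > 0 \<and> three_real_roots D m kappa B d1 r c}"
      then obtain c2 where x: "x = ereal c2" and c2: "c2 > 0" and th: "three_real_roots D m kappa B d1 r c2" by auto
      have "ereal c2 \<le> c_star D m kappa B d1 r"
      proof (rule c_star_ge)
        fix c assume "0 < c" "ereal c < ereal c2"
        thus "no_bad_roots D m kappa B d1 r c" using P1_main[OF r Ap' Bn d1p _ _ th] by simp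
      qed
      thus "x \<le> c_star D m kappa B d1 r" by (simp add: x)
    qed
  qed
  have part2: "B \<ge> - d1 \<longrightarrow> (\<exists>R>0. \<forall>r\<ge>R. c_star D m kappa B d1 r = \<infinity>)"
  proof
    assume Bd: "B \<ge> - d1"
    show "\<exists>R>0. \<forall>r\<ge>R. c_star D m kappa B d1 r = \<infinity>"
    proof (intro exI[of _ 1] conjI allI impI)
      fix r :: real assume "r \<ge> 1"
      hence r: "r > 0" by simp
      have "\<infinity> \<le> c_star D m kappa B d1 r"
        by (rule c_star_ge) (use P2_main[OF r Ap' Bn Bd] in auto)
      thus "c_star D m kappa B d1 r = \<infinity>" by simp
    qed simp
  qed
  have part3: "B < - d1 \<longrightarrow> ((\<lambda>r. ereal r * c_star D m kappa B d1 r) \<longlongrightarrow> ereal (mu_star D m kappa B d1)) at_top"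
  proof
    assume Bd: "B < - d1"
    define \<beta> where "\<beta> = - B"
    have bd: "\<beta> > d1" using Bd by (simp add: \<beta>_def)
    define \<mu> where "\<mu> = mu_star D m kappa B d1"
    have mu_eq: "\<mu> = pi * sqrt (A / (\<beta> - d1))" by (simp add: \<mu>_def mu_star_def A_def \<beta>_def)
    have mup: "\<mu> > 0" using Ap bd by (simp add: mu_eq)
    have musq: "A / \<mu>\<^sup>2 = (\<beta> - d1) / pi\<^sup>2"
      using Ap bd by (simp add: mu_eq power_mult_distrib field_simps)
    show "((\<lambda>r. ereal r * c_star D m kappa B d1 r) \<longlongrightarrow> ereal (mu_star D m kappa B d1)) at_top"
      unfolding \<mu>_def[symmetric]
    proof (rule order_tendstoI)
      fix a assume a: "a < ereal \<mu>"
      have "max a (ereal (\<mu>/2)) < ereal \<mu>" using a mup by simp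
      from ereal_dense2[OF this] obtain \<mu>' where mu': "max a (ereal (\<mu>/2)) < ereal \<mu>'" "ereal \<mu>' < ereal \<mu>" by blast
      have amu: "a < ereal \<mu>'" and mu'p: "\<mu>' > 0" and mu'l: "\<mu>' < \<mu>" using mu' mup by auto
      define \<alpha>0 where "\<alpha>0 = A / \<mu>'\<^sup>2"
      have "A / \<mu>\<^sup>2 < A / \<mu>'\<^sup>2" using Ap mu'p mu'l by (intro divide_strict_left_mono power_strict_mono) auto
      hence a0: "\<alpha>0 > (\<beta> - d1)/pi\<^sup>2" using musq by (simp add: \<alpha>0_def)
      from P3_low[OF d1p bd a0] obtain \<epsilon>0 where e0: "\<epsilon>0 > 0" and
        low: "\<And>\<epsilon> \<alpha> \<xi> \<eta>. 0 < \<epsilon> \<Longrightarrow> \<epsilon> < \<epsilon>0 \<Longrightarrow> \<alpha> \<ge> \<alpha>0 \<Longrightarrow> \<xi> > 0 \<Longrightarrow> \<eta> \<noteq> 0 \<Longrightarrow>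
          2*\<alpha>*\<xi>*\<eta> - \<epsilon>*\<eta> + \<beta>*exp(-\<xi>) * sin \<eta> = 0 \<Longrightarrow>
          \<alpha>*(\<xi>\<^sup>2-\<eta>\<^sup>2) - \<epsilon>*\<xi> - d1 - \<beta>*exp(-\<xi>)*cos \<eta> = 0 \<Longrightarrow> False" by blast
      show "\<forall>\<^sub>F r in at_top. a < ereal r * c_star D m kappa B d1 r"
        using eventually_gt_at_top[of "1/\<epsilon>0"]
      proof (rule eventually_mono)
        fix r assume rr: "1/\<epsilon>0 < r"
        have "1/\<epsilon>0 > 0" using e0 by simp
        hence r: "r > 0" using rr by linarith
        have er: "1/r < \<epsilon>0" using rr e0 r by (simp add: field_simps)
        have "ereal (\<mu>'/r) \<le> c_star D m kappa B d1 r"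
        proof (rule c_star_ge)
          fix c assume c: "0 < c" "ereal c < ereal (\<mu>'/r)"
          show "no_bad_roots D m kappa B d1 r c"
            unfolding no_bad_roots_def
          proof (intro allI impI)
            fix z assume rez: "Re z > 0" and z: "chi_star D m kappa B d1 r c z = 0"
            show "Im z = 0"
            proof (rule ccontr)
              assume imz: "Im z \<noteq> 0"
              define \<alpha> where "\<alpha> = A / (c * r)\<^sup>2"
              have I: "2*\<alpha>*(Re z * r)*(Im z * r) - (1/r)*(Im z * r) + \<beta>*exp(-(Re z * r)) * sin (Im z * r) = 0"
                using bridge(1)[OF r c(1) z] by (simp add: \<alpha>_def A_def \<beta>_def)
              have R: "\<alpha>*((Re z * r)\<^sup>2-(Im z * r)\<^sup>2) - (1/r)*(Re z * r) - d1 - \<beta>*exp(-(Re z * r))*cos (Im z * r) = 0"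
                using bridge(2)[OF r c(1) z] by (simp add: \<alpha>_def A_def \<beta>_def)
              have "c * r < \<mu>'" using c r by (simp add: field_simps)
              hence "(c * r)\<^sup>2 < \<mu>'\<^sup>2" using c r by (intro power_strict_mono) auto
              hence "\<alpha> \<ge> \<alpha>0" using Ap c r mu'p \<open>c * r < \<mu>'\<close> unfolding \<alpha>_def \<alpha>0_def
                by (intro divide_left_mono) auto
              moreover have "Re z * r > 0" "Im z * r \<noteq> 0" using rez imz r by auto
              moreover have "1/r > 0" using r by simp
              ultimately show False using low[OF _ er _ _ _ I R] by blast
            qed
          qed
        qed
        hence "ereal r * ereal (\<mu>'/r) \<le> ereal r * c_star D m kappa B d1 r"
          using r by (intro ereal_mult_left_mono) auto
        moreover have "ereal r * ereal (\<mu>'/r) = ereal \<mu>'" using r by simp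
        ultimately show "a < ereal r * c_star D m kappa B d1 r" using amu by simp
      qed
    next
      fix a assume a: "ereal \<mu> < a"
      from ereal_dense2[OF a] obtain \<mu>'' where mu'': "ereal \<mu> < ereal \<mu>''" "ereal \<mu>'' < a" by blast
      have mul: "\<mu> < \<mu>''" using mu'' by simp
      have mu''p: "\<mu>'' > 0" using mul mup by linarith
      define T where "T = A / \<mu>''\<^sup>2"
      have T0: "T > 0" using Ap mu''p by (simp add: T_def)
      have "A / \<mu>''\<^sup>2 < A / \<mu>\<^sup>2" using Ap mup mul by (intro divide_strict_left_mono power_strict_mono) auto
      hence Tl: "T < (\<beta> - d1)/pi\<^sup>2" using musq by (simp add: T_def)
      from P3_up[OF d1p bd T0 Tl] obtain \<epsilon>0 where e0: "\<epsilon>0 > 0" and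
        up: "\<And>\<epsilon>. 0 < \<epsilon> \<Longrightarrow> \<epsilon> \<le> \<epsilon>0 \<Longrightarrow> (\<exists>\<alpha> \<xi> \<eta>. \<alpha> \<ge> T \<and> \<xi> > 0 \<and> \<eta> > 0 \<and>
          2*\<alpha>*\<xi>*\<eta> - \<epsilon>*\<eta> + \<beta>*exp(-\<xi>) * sin \<eta> = 0 \<and>
          \<alpha>*(\<xi>\<^sup>2-\<eta>\<^sup>2) - \<epsilon>*\<xi> - d1 - \<beta>*exp(-\<xi>)*cos \<eta> = 0)" by blast
      show "\<forall>\<^sub>F r in at_top. ereal r * c_star D m kappa B d1 r < a"
        using eventually_gt_at_top[of "1/\<epsilon>0"]
      proof (rule eventually_mono)
        fix r assume rr: "1/\<epsilon>0 < r"
        have "1/\<epsilon>0 > 0" using e0 by simp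
        hence r: "r > 0" using rr by linarith
        have er: "1/r \<le> \<epsilon>0" using rr e0 r by (simp add: field_simps)
        from up[OF _ er] r obtain \<alpha> \<xi> \<eta> where al: "\<alpha> \<ge> T" and xi: "\<xi> > 0" and eta: "\<eta> > 0"
          and I: "2*\<alpha>*\<xi>*\<eta> - (1/r)*\<eta> + \<beta>*exp(-\<xi>) * sin \<eta> = 0"
          and R: "\<alpha>*(\<xi>\<^sup>2-\<eta>\<^sup>2) - (1/r)*\<xi> - d1 - \<beta>*exp(-\<xi>)*cos \<eta> = 0" by auto
        have alp: "\<alpha> > 0" using al T0 by linarith
        define c where "c = sqrt (A / \<alpha>) / r"
        have cp: "c > 0" using Ap alp r by (simp add: c_def)
        have root: "chi_star D m kappa B d1 r c (Complex (\<xi>/r) (\<eta>/r)) = 0"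
          using bridge_back[OF r alp Ap', of \<xi> \<eta> B d1] I R by (simp add: c_def A_def \<beta>_def)
        have "\<not> no_bad_roots D m kappa B d1 r c"
          unfolding no_bad_roots_def using root xi eta r
          by (auto intro!: exI[of _ "Complex (\<xi>/r) (\<eta>/r)"])
        from c_star_le[OF cp this]
        have "ereal r * c_star D m kappa B d1 r \<le> ereal r * ereal c"
          using r by (intro ereal_mult_left_mono) auto
        also have "ereal r * ereal c = ereal (sqrt (A / \<alpha>))" using r by (simp add: c_def)
        also have "ereal (sqrt (A / \<alpha>)) \<le> ereal \<mu>''"
        proof -
          have "A / \<alpha> \<le> A / T"
            by (rule divide_left_mono) (use Ap T0 al alp in auto)
          hence "sqrt (A / \<alpha>) \<le> sqrt (A / T)" by (rule real_sqrt_le_mono)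
          moreover have "A / T = \<mu>''\<^sup>2" using Ap mu''p unfolding T_def by simp
          moreover have "sqrt (\<mu>''\<^sup>2) = \<mu>''" using mu''p by simp
          ultimately show ?thesis by simp
        qed
        finally show "ereal r * c_star D m kappa B d1 r < a" using mu''(2) by simp
      qed
    qed
  qed
  show ?thesis using part1 part2 part3 by (simp add: B_def d1_def)
qed

end
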